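(* For all $p,r\in(0,1]$, $$\liminf_{n\to\infty}\Big(\sum_{D\in\hat{\mathcal D}_0(n)}\pi(D)\Big)^{1/n}\ge3^r(1-r)(1-p)^2.$$
   Context: For $n\ge1$, $\hat{\mathcal D}_0(n)$ is the set indexed by pairs $(f,g)$ where $f:\{0,\dots,n\}\to\mathbb Z$ with $f_0=f_n=0$, $|f_k-f_{k-1}|\le1$, and $g:\{0,\dots,n\}\to\{1,2\}$ with $g_0=g_n=1$ and $g_k=1$ whenever $f_{k+1}-f_k\in\{-1,1\}$ ($0\le k<n$). Each pair defines $\psi$ on $\{0,\dots,2n+4\}$ into $\mathbb Z^3$: $\psi_0=(0,0,0)$; $\psi_k=(0,1,-k)$ for $1\le k\le n+1$; $\psi_{n+2}=(0,0,-n)$; $\psi_{n+3}=(0,0,-n-1)$; $\psi_{2n+4-k}=(f_k,-f_k,-k)$ for $0\le k\le n$; sinks are $(0,1,-n-1)$ and $(0,0,-n-1)$; decoration $\kappa(f_k,-f_k,-k)=g_k$, $\kappa(0,1,-k)=2$ ($1\le k\le n$), $\kappa=0$ at sinks. With $\mathbf r(1)=r$, $\mathbf r(2)=1-r$, $\pi(D):=p^2(1-p)^{|U|}\prod_{i\in U}\mathbf r(\kappa(i))$ where $U$ is the image of $\psi$ minus the two sinks ($|U|=2n+1$). *)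

theory Defs
  imports "HOL-Analysis.Analysis"
begin

type_synonym point = "int \<times> int \<times> int"

text \<open>Index pairs (f,g) of hat-D_0(n). Functions on {0..n} are represented as
  functions on nat with canonical values f k = 0, g k = 1 for k > n.\<close>
definition hatD0 :: "nat \<Rightarrow> ((nat \<Rightarrow> int) \<times> (nat \<Rightarrow> nat)) set" where
  "hatD0 n = {(f, g).
      f 0 = 0 \<and> f n = 0 \<and>
      (\<forall>k\<in>{1..n}. \<bar>f k - f (k - 1)\<bar> \<le> 1) \<and>
      (\<forall>k\<le>n. g k \<in> {1, 2}) \<and> g 0 = 1 \<and> g n = 1 \<and>
      (\<forall>k<n. f (k + 1) - f k \<in> {-1, 1} \<longrightarrow> g k = 1) \<and>
      (\<forall>k>n. f k = 0 \<and> g k = 1)}"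

definition psi :: "nat \<Rightarrow> (nat \<Rightarrow> int) \<Rightarrow> nat \<Rightarrow> point" where
  "psi n f k =
     (if k = 0 then (0, 0, 0)
      else if k \<le> n + 1 then (0, 1, - int k)
      else if k = n + 2 then (0, 0, - int n)
      else if k = n + 3 then (0, 0, - int n - 1)
      else (f (2 * n + 4 - k), - f (2 * n + 4 - k), - int (2 * n + 4 - k)))"

definition sinks :: "nat \<Rightarrow> point set" where
  "sinks n = {(0, 1, - int n - 1), (0, 0, - int n - 1)}"

definition Uset :: "nat \<Rightarrow> (nat \<Rightarrow> int) \<Rightarrow> point set" where
  "Uset n f = psi n f ` {0..2 * n + 4} - sinks n"

definition kappa :: "nat \<Rightarrow> (nat \<Rightarrow> int) \<Rightarrow> (nat \<Rightarrow> nat) \<Rightarrow> point \<Rightarrow> nat" where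
  "kappa n f g x =
     (if x \<in> sinks n then 0
      else if (\<exists>k\<in>{1..n}. x = (0, 1, - int k)) then 2
      else if (\<exists>k\<le>n. x = (f k, - f k, - int k)) then g (nat (- snd (snd x)))
      else 0)"

definition rr :: "real \<Rightarrow> nat \<Rightarrow> real" where
  "rr r i = (if i = 1 then r else if i = 2 then 1 - r else 0)"

definition piD :: "real \<Rightarrow> real \<Rightarrow> nat \<Rightarrow> (nat \<Rightarrow> int) \<Rightarrow> (nat \<Rightarrow> nat) \<Rightarrow> real" where
  "piD p r n f g = p ^ 2 * (1 - p) ^ card (Uset n f) *
      (\<Prod>i\<in>Uset n f. rr r (kappa n f g i))"

end

theory Submission
  imports Defs "HOL-Real_Asymp.Real_Asymp"
begin

lemma Uset_eq:
  assumes f0: "f 0 = 0" and fn: "f n = 0"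
  shows "Uset n f = (\<lambda>k. (0::int, 1::int, - int k)) ` {1..n} \<union> (\<lambda>k. (f k, - f k, - int k)) ` {0..n}"
proof (rule set_eqI, rule iffI)
  fix x assume "x \<in> Uset n f"
  then obtain k where k: "k \<le> 2*n+4" "x = psi n f k" "x \<notin> sinks n"
    unfolding Uset_def by auto
  show "x \<in> (\<lambda>k. (0::int, 1::int, - int k)) ` {1..n} \<union> (\<lambda>k. (f k, - f k, - int k)) ` {0..n}"
  proof -
    consider "k = 0" | "1 \<le> k \<and> k \<le> n" | "k = n+1" | "k = n+2" | "k = n+3" | "n+4 \<le> k" by linarith
    then show ?thesis
    proof cases
      case 1 then show ?thesis using k f0 by (force simp: psi_def)
    next
      case 2 then show ?thesis using k by (auto simp: psi_def)
    next
      case 3 then show ?thesis using k by (auto simp: psi_def sinks_def)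
    next
      case 4 then have "x = (f n, - f n, - int n)" using k fn by (simp add: psi_def)
      then show ?thesis by auto
    next
      case 5 then show ?thesis using k by (auto simp: psi_def sinks_def)
    next
      case 6
      then have "x = (f (2*n+4-k), - f (2*n+4-k), - int (2*n+4-k))" using k by (simp add: psi_def)
      moreover have "2*n+4-k \<in> {0..n}" using 6 by auto
      ultimately show ?thesis by blast
    qed
  qed
next
  fix x assume "x \<in> (\<lambda>k. (0::int, 1::int, - int k)) ` {1..n} \<union> (\<lambda>k. (f k, - f k, - int k)) ` {0..n}"
  then consider k where "k \<in> {1..n}" "x = (0, 1, - int k)" | k where "k \<in> {0..n}" "x = (f k, - f k, - int k)" by blast
  then show "x \<in> Uset n f"
  proof cases
    case 1
    then have "x = psi n f k" by (simp add: psi_def)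
    moreover have "x \<notin> sinks n" using 1 by (auto simp: sinks_def)
    moreover have "k \<in> {0..2*n+4}" using 1 by auto
    ultimately show ?thesis unfolding Uset_def by (blast intro: rev_image_eqI)
  next
    case 2
    then have "x = psi n f (2*n+4-k)" by (auto simp: psi_def)
    moreover have "x \<notin> sinks n" using 2 by (auto simp: sinks_def)
    moreover have "2*n+4-k \<in> {0..2*n+4}" using 2 by auto
    ultimately show ?thesis unfolding Uset_def by (blast intro: rev_image_eqI)
  qed
qed

lemma piD_formula:
  assumes f0: "f 0 = 0" and fn: "f n = 0"
  shows "piD p r n f g = p^2*(1-p)^(2*n+1)*(1-r)^n*(\<Prod>k\<in>{0..n}. rr r (g k))"
proof -
  let ?A = "(\<lambda>k. (0::int, 1::int, - int k)) ` {1..n}"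
  let ?B = "(\<lambda>k. (f k, - f k, - int k)) ` {0..n}"
  have U: "Uset n f = ?A \<union> ?B" by (rule Uset_eq[OF f0 fn])
  have disj: "?A \<inter> ?B = {}" by auto
  have injA: "inj_on (\<lambda>k. (0::int, 1::int, - int k)) {1..n}" by (auto simp: inj_on_def)
  have injB: "inj_on (\<lambda>k. (f k, - f k, - int k)) {0..n}" by (auto simp: inj_on_def)
  have cA: "card ?A = n" using card_image[OF injA] by simp
  have cB: "card ?B = n+1" using card_image[OF injB] by simp
  have card: "card (Uset n f) = 2*n+1" unfolding U
    by (subst card_Un_disjoint) (use disj cA cB in auto)
  have kA: "kappa n f g (0, 1, - int k) = 2" if "k \<in> {1..n}" for k
    using that by (auto simp: kappa_def sinks_def)
  have kB: "kappa n f g (f k, - f k, - int k) = g k" if "k \<in> {0..n}" for k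
  proof -
    have "(f k, - f k, - int k) \<notin> sinks n" using that by (auto simp: sinks_def)
    moreover have "\<not> (\<exists>j\<in>{1..n}. (f k, - f k, - int k) = (0, 1, - int j))" by auto
    ultimately show ?thesis using that unfolding kappa_def by auto
  qed
  have pA: "(\<Prod>i\<in>?A. rr r (kappa n f g i)) = (1-r)^n"
    by (subst prod.reindex[OF injA]) (simp add: kA rr_def)
  have pB: "(\<Prod>i\<in>?B. rr r (kappa n f g i)) = (\<Prod>k\<in>{0..n}. rr r (g k))"
    by (subst prod.reindex[OF injB]) (simp add: kB)
  have "(\<Prod>i\<in>Uset n f. rr r (kappa n f g i)) = (1-r)^n * (\<Prod>k\<in>{0..n}. rr r (g k))"
    unfolding U by (subst prod.union_disjoint) (use disj pA pB in auto)
  then show ?thesis unfolding piD_def card by simp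
qed

lemma f_bound:
  assumes "(f, g) \<in> hatD0 n" "k \<le> n"
  shows "\<bar>f k\<bar> \<le> int k"
  using assms(2)
proof (induction k)
  case 0 then show ?case using assms(1) by (simp add: hatD0_def)
next
  case (Suc k)
  have "\<bar>f (Suc k) - f k\<bar> \<le> 1" using assms(1) Suc.prems unfolding hatD0_def
    by (auto dest!: bspec[where x="Suc k"])
  with Suc show ?case by linarith
qed

lemma finite_hatD0: "finite (hatD0 n)"
proof -
  let ?F = "{f. \<forall>x. (x \<in> {0..n} \<longrightarrow> f x \<in> {- int n..int n}) \<and> (x \<notin> {0..n} \<longrightarrow> f x = (0::int))}"
  let ?G = "{g. \<forall>x. (x \<in> {0..n} \<longrightarrow> g x \<in> {1..2::nat}) \<and> (x \<notin> {0..n} \<longrightarrow> g x = 1)}"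
  have "finite (?F \<times> ?G)"
    by (intro finite_cartesian_product finite_set_of_finite_funs) auto
  moreover have "hatD0 n \<subseteq> ?F \<times> ?G"
  proof
    fix x assume x: "x \<in> hatD0 n"
    obtain f g where fg: "x = (f, g)" by fastforce
    have "f \<in> ?F"
    proof (clarsimp)
      fix k show "(k \<le> n \<longrightarrow> - int n \<le> f k \<and> f k \<le> int n) \<and> (\<not> k \<le> n \<longrightarrow> f k = 0)"
        using f_bound[of f g n k] x fg unfolding hatD0_def by auto
    qed
    moreover have "g \<in> ?G" using x fg unfolding hatD0_def by auto
    ultimately show "x \<in> ?F \<times> ?G" using fg by simp
  qed
  ultimately show ?thesis by (rule finite_subset[rotated])
qed

lemma rr_nonneg: "0 \<le> r \<Longrightarrow> r \<le> 1 \<Longrightarrow> 0 \<le> rr r i"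
  by (simp add: rr_def)

lemma piD_nonneg:
  assumes "0 \<le> p" "p \<le> 1" "0 \<le> r" "r \<le> 1"
  shows "0 \<le> piD p r n f g"
  unfolding piD_def using assms by (intro mult_nonneg_nonneg prod_nonneg rr_nonneg) auto

definition dl :: "nat \<Rightarrow> int" where "dl c = (if c = 1 then 1 else if c = 2 then -1 else 0)"
definition gm :: "nat \<Rightarrow> nat" where "gm c = (if c = 3 then 2 else 1)"
definition ng :: "nat \<Rightarrow> nat" where "ng c = (if c = 1 then 2 else if c = 2 then 1 else c)"
definition zz :: "nat \<Rightarrow> (nat \<Rightarrow> nat) \<Rightarrow> (nat \<Rightarrow> nat) \<Rightarrow> nat \<Rightarrow> nat" where
  "zz m x y i = (if i < m then x i else ng (y (i - m)))"
definition DD :: "nat \<Rightarrow> (nat \<Rightarrow> nat) \<Rightarrow> (nat \<Rightarrow> nat) \<Rightarrow> nat \<Rightarrow> int" where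
  "DD m x y i = (if 1 \<le> i \<and> i \<le> 2*m then dl (zz m x y (i - 1)) else 0)"
definition Phi :: "nat \<Rightarrow> (nat \<Rightarrow> nat) \<Rightarrow> (nat \<Rightarrow> nat) \<Rightarrow> (nat \<Rightarrow> int) \<times> (nat \<Rightarrow> nat)" where
  "Phi m x y = ((\<lambda>k. \<Sum>i<k. DD m x y i), (\<lambda>k. if 1 \<le> k \<and> k \<le> 2*m then gm (zz m x y (k - 1)) else 1))"
definition ssum :: "nat \<Rightarrow> (nat \<Rightarrow> nat) \<Rightarrow> int" where "ssum m x = (\<Sum>i<m. dl (x i))"
definition XX :: "nat \<Rightarrow> (nat \<Rightarrow> nat) set" where "XX m = PiE {..<m} (\<lambda>_. {0..3})"
definition PP :: "nat \<Rightarrow> ((nat \<Rightarrow> nat) \<times> (nat \<Rightarrow> nat)) set" where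
  "PP m = Sigma (XX m) (\<lambda>x. {y \<in> XX m. ssum m y = ssum m x})"

lemma sum_split_add: "(\<Sum>i<m+k. h i) = (\<Sum>i<m. h i) + (\<Sum>i<k. h (m+i))" for h :: "nat \<Rightarrow> 'a::comm_monoid_add"
  by (induction k) (auto simp: add_ac)

lemma prod_split_add: "(\<Prod>i<m+k. h i) = (\<Prod>i<m. h i) * (\<Prod>i<k. h (m+i))" for h :: "nat \<Rightarrow> 'a::comm_monoid_mult"
  by (induction k) (auto simp: mult_ac)

lemma DD_total:
  assumes "2*m < k"
  shows "(\<Sum>i<k. DD m x y i) = ssum m x - ssum m y"
proof -
  have "(\<Sum>i<k. DD m x y i) = (\<Sum>i<Suc (2*m). DD m x y i)"
    using assms by (intro sum.mono_neutral_right) (auto simp: DD_def)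
  also have "\<dots> = (\<Sum>i<2*m. dl (zz m x y i))"
    by (subst sum.lessThan_Suc_shift) (simp add: DD_def)
  also have "\<dots> = (\<Sum>i<m. dl (x i)) + (\<Sum>i<m. dl (ng (y i)))"
    using sum_split_add[of "\<lambda>i. dl (zz m x y i)" m m] by (simp add: mult_2 zz_def)
  also have "(\<Sum>i<m. dl (ng (y i))) = - ssum m y"
    unfolding ssum_def sum_negf[symmetric] by (rule sum.cong) (auto simp: dl_def ng_def)
  finally show ?thesis by (simp add: ssum_def)
qed

lemma Phi_in:
  assumes xy: "(x, y) \<in> PP m" and n: "2*m < n"
  shows "Phi m x y \<in> hatD0 n"
proof -
  have xX: "x \<in> XX m" and yX: "y \<in> XX m" and s: "ssum m y = ssum m x" using xy by (auto simp: PP_def)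
  define f where "f = (\<lambda>k. \<Sum>i<k. DD m x y i)"
  define g where "g = (\<lambda>k. if 1 \<le> k \<and> k \<le> 2*m then gm (zz m x y (k - 1)) else 1)"
  have Phi: "Phi m x y = (f, g)" by (simp add: Phi_def f_def g_def)
  have fsuc: "f (Suc k) - f k = DD m x y k" for k by (simp add: f_def)
  have fbig: "f k = 0" if "2*m < k" for k using DD_total[OF that] s by (simp add: f_def)
  have dlb: "\<bar>dl c\<bar> \<le> 1" for c by (simp add: dl_def)
  have "f 0 = 0" by (simp add: f_def)
  moreover have "f n = 0" using fbig n by simp
  moreover have "\<forall>k\<in>{1..n}. \<bar>f k - f (k - 1)\<bar> \<le> 1"
  proof
    fix k assume "k \<in> {1..n}"
    then obtain j where j: "k = Suc j" by (cases k) auto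
    show "\<bar>f k - f (k - 1)\<bar> \<le> 1" using fsuc[of j] dlb unfolding j by (simp add: DD_def)
  qed
  moreover have "\<forall>k\<le>n. g k \<in> {1, 2}" by (simp add: g_def gm_def)
  moreover have "g 0 = 1" "g n = 1" using n by (auto simp: g_def)
  moreover have "\<forall>k<n. f (k + 1) - f k \<in> {-1, 1} \<longrightarrow> g k = 1"
  proof (intro allI impI)
    fix k assume "k < n" "f (k + 1) - f k \<in> {-1, 1}"
    then have "DD m x y k \<in> {-1,1}" using fsuc[of k] by simp
    then have "1 \<le> k \<and> k \<le> 2*m \<and> zz m x y (k - 1) \<noteq> 3"
      by (auto simp: DD_def dl_def split: if_splits)
    then show "g k = 1" by (simp add: g_def gm_def)
  qed
  moreover have "\<forall>k>n. f k = 0 \<and> g k = 1" using n fbig by (auto simp: g_def)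
  ultimately show ?thesis unfolding Phi hatD0_def by simp
qed

definition WW :: "real \<Rightarrow> nat \<Rightarrow> (nat \<Rightarrow> nat) \<Rightarrow> real" where
  "WW r m x = (\<Prod>i<m. rr r (gm (x i)))"

lemma Phi_prod:
  assumes n: "2*m < n"
  shows "(\<Prod>k\<in>{0..n}. rr r (snd (Phi m x y) k)) = r ^ (Suc (n - 2*m)) * WW r m x * WW r m y"
proof -
  define g where "g = snd (Phi m x y)"
  have g: "g k = (if 1 \<le> k \<and> k \<le> 2*m then gm (zz m x y (k - 1)) else 1)" for k
    by (simp add: g_def Phi_def)
  have "{0..n} = {..<Suc n}" by auto
  then have "(\<Prod>k\<in>{0..n}. rr r (g k)) = rr r (g 0) * (\<Prod>k<n. rr r (g (Suc k)))"
    by (simp only: prod.lessThan_Suc_shift)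
  also have "(\<Prod>k<n. rr r (g (Suc k))) = (\<Prod>k<2*m. rr r (g (Suc k))) * (\<Prod>k<n - 2*m. rr r (g (Suc (2*m + k))))"
    using prod_split_add[of "\<lambda>k. rr r (g (Suc k))" "2*m" "n - 2*m"] n by simp
  also have "(\<Prod>k<n - 2*m. rr r (g (Suc (2*m + k)))) = r ^ (n - 2*m)"
    by (simp add: g rr_def)
  also have "(\<Prod>k<2*m. rr r (g (Suc k))) = (\<Prod>k<2*m. rr r (gm (zz m x y k)))"
    by (rule prod.cong) (auto simp: g)
  also have "\<dots> = WW r m x * WW r m y"
  proof -
    have "(\<Prod>k<2*m. rr r (gm (zz m x y k))) = (\<Prod>k<m. rr r (gm (zz m x y k))) * (\<Prod>k<m. rr r (gm (zz m x y (m+k))))"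
      using prod_split_add[of "\<lambda>k. rr r (gm (zz m x y k))" m m] by (simp add: mult_2)
    moreover have "(\<Prod>k<m. rr r (gm (zz m x y k))) = WW r m x"
      unfolding WW_def by (rule prod.cong) (auto simp: zz_def)
    moreover have "(\<Prod>k<m. rr r (gm (zz m x y (m+k)))) = WW r m y"
      unfolding WW_def by (rule prod.cong) (auto simp: zz_def gm_def ng_def)
    ultimately show ?thesis by simp
  qed
  finally show ?thesis using g[of 0] by (simp add: g_def rr_def mult_ac)
qed

lemma Phi_weight:
  assumes xy: "(x, y) \<in> PP m" and n: "2*m < n" "n \<le> 2*m+2" and p: "0 \<le> p" "p \<le> 1" and r: "0 < r" "r \<le> 1"
  shows "piD p r n (fst (Phi m x y)) (snd (Phi m x y)) \<ge> p^2*(1-p)^(2*n+1)*(1-r)^n * r^3 * WW r m x * WW r m y"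
proof -
  have f0: "fst (Phi m x y) 0 = 0" by (simp add: Phi_def)
  have W0: "0 \<le> WW r m x" "0 \<le> WW r m y" using r by (auto simp: WW_def intro!: prod_nonneg rr_nonneg)
  have "r ^ 3 \<le> r ^ Suc (n - 2*m)" using n r by (intro power_decreasing) auto
  then have "r^3 * (WW r m x * WW r m y) \<le> r ^ Suc (n - 2*m) * (WW r m x * WW r m y)"
    using W0 by (intro mult_right_mono) auto
  then have "p^2*(1-p)^(2*n+1)*(1-r)^n * (r^3 * (WW r m x * WW r m y)) \<le> p^2*(1-p)^(2*n+1)*(1-r)^n * (r ^ Suc (n - 2*m) * (WW r m x * WW r m y))"
    using p r by (intro mult_left_mono) auto
  moreover have "fst (Phi m x y) n = 0"
  proof -
    show ?thesis using Phi_in[OF xy n(1)] by (cases "Phi m x y") (simp add: hatD0_def)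
  qed
  ultimately show ?thesis
    using piD_formula[of "fst (Phi m x y)" n p r "snd (Phi m x y)", OF f0] Phi_prod[OF n(1), of r x y]
    by (simp add: mult_ac)
qed

lemma letter_inj: "c \<in> {0..3} \<Longrightarrow> c' \<in> {0..3} \<Longrightarrow> dl c = dl c' \<Longrightarrow> gm c = gm c' \<Longrightarrow> c = c'"
proof -
  assume a: "c \<in> {0..3}" "c' \<in> {0..3}" "dl c = dl c'" "gm c = gm c'"
  have "c \<in> {0,1,2,3}" "c' \<in> {0,1,2,3}" using a(1,2) by auto
  then show "c = c'" using a(3,4) by (auto simp: dl_def gm_def)
qed

lemma ng_ng: "ng (ng c) = c" by (simp add: ng_def)

lemma Phi_inj: "inj_on (\<lambda>(x, y). Phi m x y) (XX m \<times> XX m)"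
proof (rule inj_onI, clarify)
  fix x y x' y' assume x: "x \<in> XX m" and y: "y \<in> XX m" and x': "x' \<in> XX m" and y': "y' \<in> XX m"
    and eq: "Phi m x y = Phi m x' y'"
  have eqf: "(\<Sum>i<k. DD m x y i) = (\<Sum>i<k. DD m x' y' i)" for k
    using eq unfolding Phi_def by (auto dest: fun_cong[where x=k])
  have eqD: "DD m x y k = DD m x' y' k" for k
    using eqf[of "Suc k"] eqf[of k] by simp
  have eqg: "(if 1 \<le> k \<and> k \<le> 2*m then gm (zz m x y (k - 1)) else 1) = (if 1 \<le> k \<and> k \<le> 2*m then gm (zz m x' y' (k - 1)) else 1)" for k
    using eq unfolding Phi_def by (auto dest: fun_cong[where x=k])
  have rng: "zz m a b i \<in> {0..3}" if "a \<in> XX m" "b \<in> XX m" "i < 2*m" for a b i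
  proof (cases "i < m")
    case True then show ?thesis using that by (auto simp: zz_def XX_def PiE_iff)
  next
    case False
    then have "b (i - m) \<in> {0..3}" using that by (auto simp: XX_def PiE_iff)
    then show ?thesis using False by (auto simp: zz_def ng_def)
  qed
  have zeq: "zz m x y i = zz m x' y' i" if "i < 2*m" for i
  proof (rule letter_inj)
    show "zz m x y i \<in> {0..3}" "zz m x' y' i \<in> {0..3}" using rng that x y x' y' by auto
    show "dl (zz m x y i) = dl (zz m x' y' i)" using eqD[of "Suc i"] that by (simp add: DD_def)
    show "gm (zz m x y i) = gm (zz m x' y' i)" using eqg[of "Suc i"] that by simp
  qed
  have "x = x'"
  proof (rule PiE_ext)
    show "x \<in> PiE {..<m} (\<lambda>_. {0..3})" "x' \<in> PiE {..<m} (\<lambda>_. {0..3})" using x x' by (auto simp: XX_def)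
    fix i assume "i \<in> {..<m}" then show "x i = x' i" using zeq[of i] by (simp add: zz_def)
  qed
  moreover have "y = y'"
  proof (rule PiE_ext)
    show "y \<in> PiE {..<m} (\<lambda>_. {0..3})" "y' \<in> PiE {..<m} (\<lambda>_. {0..3})" using y y' by (auto simp: XX_def)
    fix i assume "i \<in> {..<m}"
    then have "ng (y i) = ng (y' i)" using zeq[of "m+i"] by (simp add: zz_def)
    then show "y i = y' i" by (metis ng_ng)
  qed
  ultimately show "x = x' \<and> y = y'" by simp
qed

lemma finite_XX: "finite (XX m)" by (simp add: XX_def finite_PiE)

lemma ssum_bound: "ssum m x \<in> {- int m..int m}"
proof -
  have "\<bar>ssum m x\<bar> \<le> (\<Sum>i<m. \<bar>dl (x i)\<bar>)" unfolding ssum_def by (rule sum_abs)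
  also have "\<dots> \<le> (\<Sum>i<m. 1)" by (intro sum_mono) (simp add: dl_def)
  finally show ?thesis by auto
qed

lemma sum_WW: "(\<Sum>x\<in>XX m. WW r m x) = (1 + 2*r)^m"
proof -
  have "(\<Sum>x\<in>XX m. WW r m x) = (\<Prod>i<m. \<Sum>c\<in>{0..3::nat}. rr r (gm c))"
    unfolding XX_def WW_def by (subst prod_sum_PiE) auto
  also have "(\<Sum>c\<in>{0..3::nat}. rr r (gm c)) = 1 + 2*r"
  proof -
    have "{0..3::nat} = {0,1,2,3}" by auto
    then show ?thesis by (simp add: rr_def gm_def)
  qed
  finally show ?thesis by simp
qed

lemma sumP:
  assumes r: "0 \<le> r"
  shows "(\<Sum>(x,y)\<in>PP m. WW r m x * WW r m y) \<ge> (1 + 2*r)^(2*m) / (2*m+1)"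
proof -
  define J where "J = {- int m..int m}"
  define C where "C j = (\<Sum>y\<in>{y \<in> XX m. ssum m y = j}. WW r m y)" for j
  have fJ: "finite J" by (simp add: J_def)
  have sJ: "ssum m ` XX m \<subseteq> J" using ssum_bound by (auto simp: J_def)
  have cJ: "card J = 2*m+1" by (simp add: J_def)
  have "(\<Sum>(x,y)\<in>PP m. WW r m x * WW r m y) = (\<Sum>x\<in>XX m. \<Sum>y\<in>{y \<in> XX m. ssum m y = ssum m x}. WW r m x * WW r m y)"
    unfolding PP_def by (rule sum.Sigma[symmetric]) (auto simp: finite_XX)
  also have "\<dots> = (\<Sum>x\<in>XX m. WW r m x * C (ssum m x))"
    by (simp add: C_def sum_distrib_left)
  also have "\<dots> = (\<Sum>j\<in>J. \<Sum>x\<in>{x \<in> XX m. ssum m x = j}. WW r m x * C (ssum m x))"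
    by (rule sum.group[symmetric, OF finite_XX fJ sJ])
  also have "\<dots> = (\<Sum>j\<in>J. C j * C j)"
    by (rule sum.cong) (auto simp: C_def sum_distrib_right)
  finally have E1: "(\<Sum>(x,y)\<in>PP m. WW r m x * WW r m y) = (\<Sum>j\<in>J. (C j)^2)" by (simp add: power2_eq_square)
  have E2: "(\<Sum>j\<in>J. C j) = (1 + 2*r)^m"
    unfolding C_def using sum.group[OF finite_XX fJ sJ, of "WW r m"] sum_WW by simp
  have "(\<Sum>j\<in>J. C j * 1)^2 \<le> (\<Sum>j\<in>J. (C j)^2) * (\<Sum>j\<in>J. 1^2)"
    by (rule Cauchy_Schwarz_ineq_sum)
  then have "((1 + 2*r)^m)^2 \<le> (\<Sum>j\<in>J. (C j)^2) * (2*m+1)"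
    using E2 cJ by simp
  then have "(1 + 2*r)^(2*m) \<le> (\<Sum>j\<in>J. (C j)^2) * (2*m+1)"
    by (simp add: power_mult[symmetric] mult.commute)
  then show ?thesis unfolding E1 by (simp add: divide_le_eq)
qed

lemma Sbound:
  assumes n: "1 \<le> n" and p: "0 < p" "p \<le> 1" and r: "0 < r" "r \<le> 1"
  defines "m \<equiv> (n - 1) div 2"
  shows "(\<Sum>(f, g)\<in>hatD0 n. piD p r n f g) \<ge> p^2*(1-p)^(2*n+1)*(1-r)^n * r^3 * ((1 + 2*r)^(2*m) / (2*m+1))"
proof -
  have m1: "2*m < n" "n \<le> 2*m+2" using n unfolding m_def by auto
  define c where "c = p^2*(1-p)^(2*n+1)*(1-r)^n * r^3"
  have c0: "0 \<le> c" using p r by (simp add: c_def)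
  define h where "h = (\<lambda>(f, g). piD p r n f g)"
  define \<Phi> where "\<Phi> = (\<lambda>(x, y). Phi m x y)"
  have sub: "\<Phi> ` PP m \<subseteq> hatD0 n" using Phi_in[OF _ m1(1)] by (auto simp: \<Phi>_def)
  have inj: "inj_on \<Phi> (PP m)"
    using Phi_inj[of m] unfolding \<Phi>_def by (rule inj_on_subset) (auto simp: PP_def)
  have hnn: "0 \<le> h z" for z using piD_nonneg[of p r] p r by (auto simp: h_def split: prod.splits)
  have "(\<Sum>z\<in>hatD0 n. h z) \<ge> (\<Sum>z\<in>\<Phi> ` PP m. h z)"
    by (rule sum_mono2[OF finite_hatD0 sub]) (use hnn in auto)
  also have "(\<Sum>z\<in>\<Phi> ` PP m. h z) = (\<Sum>z\<in>PP m. h (\<Phi> z))"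
    using sum.reindex[OF inj, of h] by (simp add: comp_def)
  also have "(\<Sum>z\<in>PP m. h (\<Phi> z)) \<ge> (\<Sum>(x,y)\<in>PP m. c * (WW r m x * WW r m y))"
  proof (rule sum_mono, clarify)
    fix x y assume xy: "(x, y) \<in> PP m"
    have "h (\<Phi> (x, y)) = piD p r n (fst (Phi m x y)) (snd (Phi m x y))"
      by (simp add: h_def \<Phi>_def case_prod_beta)
    then show "c * (WW r m x * WW r m y) \<le> h (\<Phi> (x, y))"
      using Phi_weight[OF xy m1, of p r] p r by (simp add: c_def mult_ac)
  qed
  also have "(\<Sum>(x,y)\<in>PP m. c * (WW r m x * WW r m y)) = c * (\<Sum>(x,y)\<in>PP m. WW r m x * WW r m y)"
    by (simp add: sum_distrib_left case_prod_beta)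
  also have "\<dots> \<ge> c * ((1 + 2*r)^(2*m) / (2*m+1))"
    using sumP[of r m] r c0 by (intro mult_left_mono) auto
  finally show ?thesis by (simp add: c_def h_def)
qed

lemma three_powr: fixes r :: real assumes "0 \<le> r" "r \<le> 1" shows "3 powr r \<le> 1 + 2*r"
proof -
  have "exp ((1 - r) *\<^sub>R 0 + r *\<^sub>R ln 3) \<le> (1 - r) * exp 0 + r * exp (ln 3)"
    using convex_onD[OF exp_convex, of r 0 "ln 3"] assms by simp
  then show ?thesis by (simp add: powr_def algebra_simps)
qed

lemma Lbound:
  assumes n: "1 \<le> n" and p: "0 < p" "p < 1" and r: "0 < r" "r < 1"
  shows "(\<Sum>(f, g)\<in>hatD0 n. piD p r n f g) \<ge>
     (p^2*(1-p)*r^3/(1+2*r)^2) * ((1-p)^2*(1-r)*(1+2*r))^n / (real n + 1)"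
proof -
  define m where "m = (n - 1) div 2"
  have m1: "2*m < n" "n \<le> 2*m+2" using n unfolding m_def by auto
  define A where "A = p^2*(1-p)^(2*n+1)*(1-r)^n * r^3"
  have A0: "0 \<le> A" using p r by (simp add: A_def)
  define b where "b = 1 + 2*r"
  have b1: "1 \<le> b" using r by (simp add: b_def)
  have eq: "(p^2*(1-p)*r^3/b^2) * ((1-p)^2*(1-r)*b)^n / (real n + 1) = A * (b^n / (b^2 * (real n + 1)))"
  proof -
    have e1: "((1-p)^2*(1-r)*b)^n = (1-p)^(2*n) * (1-r)^n * b^n"
      by (simp add: power_mult_distrib power_mult)
    have e2: "(1-p)^(2*n+1) = (1-p) * (1-p)^(2*n)" by simp
    have "b \<noteq> 0" using b1 by auto
    then show ?thesis unfolding A_def e1 e2 by (simp add: field_simps)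
  qed
  have "b^n \<le> b^(2*m+2)" using b1 m1 by (intro power_increasing) auto
  also have "\<dots> = b^(2*m) * b^2" by (simp only: power_add)
  finally have "b^n / (b^2 * (real n + 1)) \<le> b^(2*m) * b^2 / (b^2 * (real n + 1))"
    using b1 by (intro divide_right_mono) auto
  also have "\<dots> = b^(2*m) / (real n + 1)" using b1 by simp
  also have "\<dots> \<le> b^(2*m) / (2*m+1)"
    using m1 b1 by (intro divide_left_mono) auto
  finally have "A * (b^n / (b^2 * (real n + 1))) \<le> A * (b^(2*m) / (2*m+1))"
    using A0 by (intro mult_left_mono) auto
  moreover have "A * (b^(2*m) / (2*m+1)) \<le> (\<Sum>(f, g)\<in>hatD0 n. piD p r n f g)"
    using Sbound[OF n p(1) _ r(1)] p r unfolding A_def b_def m_def by simp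
  ultimately show ?thesis
    unfolding eq[unfolded b_def] b_def by linarith
qed

lemma lim_aux: assumes "0 < (K::real)" shows "(\<lambda>n. (K / (real n + 1)) powr (1 / real n)) \<longlonglongrightarrow> 1"
  using assms by real_asymp

theorem mainTheorem13:
  fixes p r :: real
  assumes "0 < p" "p \<le> 1" "0 < r" "r \<le> 1"
  shows "liminf (\<lambda>n. ereal ((\<Sum>(f, g)\<in>hatD0 n. piD p r n f g) powr (1 / real n)))
           \<ge> ereal (3 powr r * (1 - r) * (1 - p) ^ 2)"
proof (cases "p = 1 \<or> r = 1")
  case True
  then have "ereal (3 powr r * (1 - r) * (1 - p) ^ 2) = ereal 0" by auto
  moreover have "ereal 0 \<le> liminf (\<lambda>n. ereal ((\<Sum>(f, g)\<in>hatD0 n. piD p r n f g) powr (1 / real n)))"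
    by (rule Liminf_bounded) simp
  ultimately show ?thesis by (simp only:)
next
  case False
  then have p: "0 < p" "p < 1" and r: "0 < r" "r < 1" using assms by auto
  define S where "S n = (\<Sum>(f, g)\<in>hatD0 n. piD p r n f g)" for n
  define K where "K = p^2*(1-p)*r^3/(1+2*r)^2"
  define Q where "Q = (1-p)^2*(1-r)*(1+2*r)"
  have K0: "0 < K" using p r by (simp add: K_def)
  have Q0: "0 < Q" using p r by (simp add: Q_def)
  have lim: "(\<lambda>n. ereal ((K / (real n + 1)) powr (1 / real n) * Q)) \<longlonglongrightarrow> ereal Q"
    using tendsto_mult_right[OF lim_aux[OF K0], of Q] by (simp add: lim_ereal)
  have ev: "eventually (\<lambda>n. ereal ((K / (real n + 1)) powr (1 / real n) * Q) \<le> ereal (S n powr (1 / real n))) sequentially"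
    using eventually_ge_at_top[of 1]
  proof eventually_elim
    case (elim n)
    have L: "K * Q^n / (real n + 1) \<le> S n"
      using Lbound[OF elim p r] unfolding S_def K_def Q_def by simp
    have "(K / (real n + 1)) powr (1 / real n) * Q = (K / (real n + 1) * Q^n) powr (1 / real n)"
    proof -
      have "(Q^n) powr (1 / real n) = Q"
        using Q0 elim by (simp add: powr_realpow[symmetric] powr_powr)
      moreover have "(K / (real n + 1) * Q^n) powr (1 / real n) = (K / (real n + 1)) powr (1 / real n) * (Q^n) powr (1 / real n)"
        using K0 Q0 by (intro powr_mult)
      ultimately show ?thesis by simp
    qed
    also have "\<dots> \<le> S n powr (1 / real n)"
      using L K0 Q0 by (intro powr_mono2) auto
    finally show ?case by (simp add: mult.commute)
  qed
  have "ereal Q \<le> liminf (\<lambda>n. ereal (S n powr (1 / real n)))"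
    using Liminf_mono[OF ev] lim_imp_Liminf[OF trivial_limit_sequentially lim] by simp
  moreover have "3 powr r * (1 - r) * (1 - p) ^ 2 \<le> Q"
    unfolding Q_def using three_powr[of r] r p by (simp add: mult_right_mono mult_ac)
  ultimately show ?thesis unfolding S_def by (meson ereal_less_eq(3) order_trans)
qed

end
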